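(* Let $\Psi$ be a finite (possibly empty) composition of the substitutions $U$ and $V$. (i) If $\Psi(ab)=a^{e_1}ba^{e_2}b\cdots a^{e_n}b$ with integers $e_i\ge1$, then for every $i\in\{2,\dots,n\}$, in the lexicographic order, $(e_1,e_2,\dots,e_n,\infty)>(e_i,e_{i+1},\dots,e_n,\infty)$ and $(e_n,e_{n-1},\dots,e_1,\infty)<(e_{n-i+1},e_{n-i},\dots,e_1,\infty)$. (ii) If $\Psi(ab)=ab^{e_1}ab^{e_2}\cdots ab^{e_n}$ with integers $e_i\ge1$, then for every $i\in\{2,\dots,n\}$, in the lexicographic order, $(e_1,e_2,\dots,e_n,1,1,\dots)<(e_i,e_{i+1},\dots,e_n,1,1,\dots)$ and $(e_n,e_{n-1},\dots,e_1,1,1,\dots)>(e_{n-i+1},e_{n-i},\dots,e_1,1,1,\dots)$.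
   Context: Words are finite words in the letters $a,b$. The Nielsen moves are the substitutions $U:a\mapsto ab,\ b\mapsto b$ and $V:a\mapsto a,\ b\mapsto ab$, applied letterwise. Sequences are compared lexicographically, with $\infty$ regarded as larger than every integer; in (ii) the sequences are extended by infinitely many $1$'s. *)

theory Defs
  imports Main "HOL-Library.Extended_Nat"
begin

datatype letter = LA | LB

datatype nmove = MU | MV

fun nsub :: "nmove \<Rightarrow> letter \<Rightarrow> letter list" where
  "nsub MU LA = [LA, LB]"
| "nsub MU LB = [LB]"
| "nsub MV LA = [LA]"
| "nsub MV LB = [LA, LB]"

definition nmove_apply :: "nmove \<Rightarrow> letter list \<Rightarrow> letter list" where
  "nmove_apply m w = concat (map (nsub m) w)"

text \<open>Composition of a finite (possibly empty) list of moves: [m1,...,mk] gives m1 o ... o mk.\<close>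
definition nmoves_apply :: "nmove list \<Rightarrow> letter list \<Rightarrow> letter list" where
  "nmoves_apply ms = foldr (\<lambda>m f. nmove_apply m \<circ> f) ms id"

definition lex_less :: "(nat \<Rightarrow> 'a::linorder) \<Rightarrow> (nat \<Rightarrow> 'a) \<Rightarrow> bool" where
  "lex_less f g \<longleftrightarrow> (\<exists>k. (\<forall>j<k. f j = g j) \<and> f k < g k)"

text \<open>Finite sequence followed by infinity (then padded with infinity; irrelevant for the order).\<close>
definition seq_inf :: "nat list \<Rightarrow> nat \<Rightarrow> enat" where
  "seq_inf xs j = (if j < length xs then enat (xs ! j) else \<infinity>)"

definition seq_one :: "nat list \<Rightarrow> nat \<Rightarrow> nat" where
  "seq_one xs j = (if j < length xs then xs ! j else 1)"

end

theory Submission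
  imports Defs
begin

fun llr :: "nat list \<Rightarrow> nat list \<Rightarrow> bool" where
  "llr [] _ = False"
| "llr (x#xs) [] = True"
| "llr (x#xs) (y#ys) = (x < y \<or> x = y \<and> llr xs ys)"

fun llo :: "nat list \<Rightarrow> nat list \<Rightarrow> bool" where
  "llo [] [] = False"
| "llo [] (y#ys) = (1 < y \<or> 1 = y \<and> llo [] ys)"
| "llo (x#xs) [] = (x < 1 \<or> x = 1 \<and> llo xs [])"
| "llo (x#xs) (y#ys) = (x < y \<or> x = y \<and> llo xs ys)"

lemma llr_llo: "llr x y \<Longrightarrow> \<not>(\<exists>z. x = y @ z) \<Longrightarrow> llo x y"
  by (induction x y rule: llr.induct) auto

lemma seq_inf_Cons0: "seq_inf (a#xs) 0 = enat a" by (simp add: seq_inf_def)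
lemma seq_inf_Cons: "seq_inf (a#xs) (Suc j) = seq_inf xs j" by (simp add: seq_inf_def)
lemma seq_inf_Nil: "seq_inf [] j = \<infinity>" by (simp add: seq_inf_def)
lemma seq_one_Cons0: "seq_one (a#xs) 0 = a" by (simp add: seq_one_def)
lemma seq_one_Cons: "seq_one (a#xs) (Suc j) = seq_one xs j" by (simp add: seq_one_def)
lemma seq_one_Nil: "seq_one [] j = 1" by (simp add: seq_one_def)
lemma seq_one_Nil_Suc: "seq_one [] (Suc j) = seq_one [] j" by (simp add: seq_one_def)

lemma lex_Suc:
  assumes "lex_less (\<lambda>j. f (Suc j)) (\<lambda>j. g (Suc j))" "f 0 = g 0"
  shows "lex_less f g"
proof -
  obtain k where k: "\<forall>j<k. f (Suc j) = g (Suc j)" "f (Suc k) < g (Suc k)"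
    using assms(1) unfolding lex_less_def by blast
  have "\<forall>j<Suc k. f j = g j"
  proof (intro allI impI)
    fix j assume "j < Suc k" then show "f j = g j" using k assms(2) by (cases j) auto
  qed
  then show ?thesis using k unfolding lex_less_def by blast
qed

lemma lex0: "f 0 < g 0 \<Longrightarrow> lex_less f g"
  unfolding lex_less_def by (rule exI[of _ 0]) auto

lemma llr_lex: "llr x y \<Longrightarrow> lex_less (seq_inf x) (seq_inf y)"
proof (induction x y rule: llr.induct)
  case (2 x xs)
  have "seq_inf (x#xs) 0 < seq_inf [] 0" by (simp only: seq_inf_Cons0 seq_inf_Nil) simp
  then show ?case by (rule lex0)
next
  case (3 x xs y ys)
  show ?case
  proof (cases "x < y")
    case True
    then have "seq_inf (x#xs) 0 < seq_inf (y#ys) 0" by (simp only: seq_inf_Cons0) simp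
    then show ?thesis by (rule lex0)
  next
    case False
    then have e: "x = y" and l: "llr xs ys" using 3(2) by auto
    have "lex_less (seq_inf xs) (seq_inf ys)" using 3(1)[OF l] .
    then have "lex_less (\<lambda>j. seq_inf (x#xs) (Suc j)) (\<lambda>j. seq_inf (y#ys) (Suc j))"
      by (simp only: seq_inf_Cons)
    moreover have "seq_inf (x#xs) 0 = seq_inf (y#ys) 0" by (simp only: seq_inf_Cons0 e)
    ultimately show ?thesis by (rule lex_Suc)
  qed
qed simp

lemma llo_lex: "llo x y \<Longrightarrow> lex_less (seq_one x) (seq_one y)"
proof (induction x y rule: llo.induct)
  case (2 y ys)
  show ?case
  proof (cases "1 < y")
    case True
    then have "seq_one [] 0 < seq_one (y#ys) 0" by (simp only: seq_one_Cons0 seq_one_Nil)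
    then show ?thesis by (rule lex0)
  next
    case False
    then have e: "1 = y" and l: "llo [] ys" using 2(2) by auto
    have "lex_less (seq_one []) (seq_one ys)" using 2(1)[OF l] .
    then have "lex_less (\<lambda>j. seq_one [] (Suc j)) (\<lambda>j. seq_one (y#ys) (Suc j))"
      by (simp only: seq_one_Cons seq_one_Nil_Suc)
    moreover have "seq_one [] 0 = seq_one (y#ys) 0" by (simp only: seq_one_Cons0 seq_one_Nil e)
    ultimately show ?thesis by (rule lex_Suc)
  qed
next
  case (3 x xs)
  show ?case
  proof (cases "x < 1")
    case True
    then have "seq_one (x#xs) 0 < seq_one [] 0" by (simp only: seq_one_Cons0 seq_one_Nil)
    then show ?thesis by (rule lex0)
  next
    case False
    then have e: "x = 1" and l: "llo xs []" using 3(2) by auto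
    have "lex_less (seq_one xs) (seq_one [])" using 3(1)[OF l] .
    then have "lex_less (\<lambda>j. seq_one (x#xs) (Suc j)) (\<lambda>j. seq_one [] (Suc j))"
      by (simp only: seq_one_Cons seq_one_Nil_Suc)
    moreover have "seq_one (x#xs) 0 = seq_one [] 0" by (simp only: seq_one_Cons0 seq_one_Nil e)
    ultimately show ?thesis by (rule lex_Suc)
  qed
next
  case (4 x xs y ys)
  show ?case
  proof (cases "x < y")
    case True
    then have "seq_one (x#xs) 0 < seq_one (y#ys) 0" by (simp only: seq_one_Cons0)
    then show ?thesis by (rule lex0)
  next
    case False
    then have e: "x = y" and l: "llo xs ys" using 4(2) by auto
    have "lex_less (seq_one xs) (seq_one ys)" using 4(1)[OF l] .
    then have "lex_less (\<lambda>j. seq_one (x#xs) (Suc j)) (\<lambda>j. seq_one (y#ys) (Suc j))"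
      by (simp only: seq_one_Cons)
    moreover have "seq_one (x#xs) 0 = seq_one (y#ys) 0" by (simp only: seq_one_Cons0 e)
    ultimately show ?thesis by (rule lex_Suc)
  qed
qed simp

lemma llr_append: "llr (p @ a) (p @ b) = llr a b"
  by (induction p) auto

lemma llr_nil: "z \<noteq> [] \<Longrightarrow> llr z []"
  by (cases z) auto

lemma llr_prefix: "llr p (p @ q) \<Longrightarrow> False"
  by (induction p) auto

lemma blk: "j < e \<Longrightarrow> llr (replicate j 1 @ 0 # a) (replicate e 1 @ b)"
proof (induction j arbitrary: e)
  case 0 then obtain e' where "e = Suc e'" by (cases e) auto
  then show ?case by simp
next
  case (Suc j) then obtain e' where "e = Suc e'" by (cases e) auto
  then show ?case using Suc by simp
qed

definition T :: "nat list \<Rightarrow> nat list" where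
  "T x = concat (map (\<lambda>e. replicate e 1 @ [0]) x)"
definition R :: "nat list \<Rightarrow> nat list" where
  "R x = concat (map (\<lambda>e. 0 # replicate e 1) x)"

lemma T_simps[simp]: "T [] = []" "T (e#xs) = replicate e 1 @ 0 # T xs"
  by (auto simp: T_def)
lemma R_simps[simp]: "R [] = []" "R (e#xs) = 0 # replicate e 1 @ R xs"
  by (auto simp: R_def)

lemma R_app: "R (x @ y) = R x @ R y" by (simp add: R_def)

lemma rev_T: "rev (T x) = R (rev x)"
  by (induction x) (auto simp: R_app)

lemma T_mono: "llr x y \<Longrightarrow> llr (T x) (T y)"
proof (induction x y rule: llr.induct)
  case (2 x xs) then show ?case by (simp add: llr_nil)
next
  case (3 x xs y ys)
  show ?case
  proof (cases "x < y")
    case True then show ?thesis using blk[of x y "T xs" "0 # T ys"] by simp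
  next
    case False
    then have "x = y" "llr xs ys" using 3(2) by auto
    then show ?thesis using 3(1) False llr_append[of "replicate x 1 @ [0]" "T xs" "T ys"] by simp
  qed
qed simp

lemma R_mono: "llr x y \<Longrightarrow> length y < length x \<Longrightarrow> llr (R x) (R y)"
proof (induction x y rule: llr.induct)
  case (2 x xs) then show ?case by (simp add: llr_nil)
next
  case (3 x xs y ys)
  show ?case
  proof (cases "x < y")
    case True
    have "xs \<noteq> []" using 3(3) by auto
    then obtain r where "R xs = 0 # r" by (cases xs) auto
    then show ?thesis using True blk[of x y r "R ys"] by simp
  next
    case False
    then have "x = y" "llr xs ys" using 3(2) by auto
    then show ?thesis using 3(1,3) False llr_append[of "0 # replicate x 1" "R xs" "R ys"] by simp
  qed
qed simp

lemma Suc_mono: "llr x y \<Longrightarrow> llr (map Suc x) (map Suc y)"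
  by (induction x y rule: llr.induct) auto

lemma drop_T: "(\<exists>m\<le>length x. drop k (T x) = T (drop m x)) \<or>
  (\<exists>m j. m < length x \<and> j < x!m \<and> drop k (T x) = replicate j 1 @ 0 # T (drop (Suc m) x))"
proof (induction x arbitrary: k)
  case Nil then show ?case by auto
next
  case (Cons e xs)
  show ?case
  proof (cases "k \<le> e")
    case True
    then have d: "drop k (T (e#xs)) = replicate (e-k) 1 @ 0 # T xs" by simp
    show ?thesis
    proof (cases "k = 0")
      case True then show ?thesis by (intro disjI1 exI[of _ 0]) simp
    next
      case False
      then show ?thesis using True d by (intro disjI2 exI[of _ 0] exI[of _ "e-k"]) simp
    qed
  next
    case False
    have ke: "k - e = Suc (k - Suc e)" using False by arith
    have d: "drop k (T (e#xs)) = drop (k - Suc e) (T xs)"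
      using False by (simp add: ke)
    from Cons.IH[of "k - Suc e"] show ?thesis
    proof
      assume "\<exists>m\<le>length xs. drop (k - Suc e) (T xs) = T (drop m xs)"
      then obtain m where "m \<le> length xs" "drop (k - Suc e) (T xs) = T (drop m xs)" by blast
      then show ?thesis using d by (intro disjI1 exI[of _ "Suc m"]) simp
    next
      assume "\<exists>m j. m < length xs \<and> j < xs!m \<and> drop (k - Suc e) (T xs) = replicate j 1 @ 0 # T (drop (Suc m) xs)"
      then obtain m j where "m < length xs" "j < xs!m" "drop (k - Suc e) (T xs) = replicate j 1 @ 0 # T (drop (Suc m) xs)" by blast
      then show ?thesis using d by (intro disjI2 exI[of _ "Suc m"] exI[of _ j]) simp
    qed
  qed
qed

lemma drop_R: "(\<exists>m\<le>length x. drop k (R x) = R (drop m x)) \<or>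
  (\<exists>m j. m < length x \<and> 0 < j \<and> drop k (R x) = replicate j 1 @ R (drop (Suc m) x))"
proof (induction x arbitrary: k)
  case Nil then show ?case by auto
next
  case (Cons e xs)
  show ?case
  proof (cases "k = 0")
    case True then show ?thesis by (intro disjI1 exI[of _ 0]) simp
  next
    case k0: False
    obtain k' where k': "k = Suc k'" using k0 by (cases k) auto
    show ?thesis
    proof (cases "k \<le> Suc e")
      case True
      then have d: "drop k (R (e#xs)) = replicate (Suc e - k) 1 @ R xs"
        using k' by simp
      show ?thesis
      proof (cases "k = Suc e")
        case True then show ?thesis using d by (intro disjI1 exI[of _ 1]) simp
      next
        case False
        then show ?thesis using True d by (intro disjI2 exI[of _ 0] exI[of _ "Suc e-k"]) simp
      qed
    next
      case False
      then have d: "drop k (R (e#xs)) = drop (k - Suc e) (R xs)"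
        using k' by simp
      from Cons.IH[of "k - Suc e"] show ?thesis
      proof
        assume "\<exists>m\<le>length xs. drop (k - Suc e) (R xs) = R (drop m xs)"
        then obtain m where "m \<le> length xs" "drop (k - Suc e) (R xs) = R (drop m xs)" by blast
        then show ?thesis using d by (intro disjI1 exI[of _ "Suc m"]) simp
      next
        assume "\<exists>m j. m < length xs \<and> 0 < j \<and> drop (k - Suc e) (R xs) = replicate j 1 @ R (drop (Suc m) xs)"
        then obtain m j where "m < length xs" "0 < j" "drop (k - Suc e) (R xs) = replicate j 1 @ R (drop (Suc m) xs)" by blast
        then show ?thesis using d by (intro disjI2 exI[of _ "Suc m"] exI[of _ j]) simp
      qed
    qed
  qed
qed

definition Inv1 :: "nat list \<Rightarrow> bool" where
  "Inv1 x \<longleftrightarrow> (\<forall>k. 0 < k \<and> k < length x \<longrightarrow> llr (drop k x) x)"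
definition Inv2 :: "nat list \<Rightarrow> bool" where
  "Inv2 x \<longleftrightarrow> (\<forall>k. 0 < k \<and> k < length x \<longrightarrow> llr x (drop k x))"

lemma Inv1_le: assumes "Inv1 x" "m < length x" shows "x!m \<le> x!0"
proof (cases "m = 0")
  case False
  obtain a xs where ax: "x = a # xs" using assms(2) by (cases x) auto
  have l: "llr (drop m x) x" using assms False unfolding Inv1_def by auto
  have d: "drop m x = x!m # drop (Suc m) x" using assms(2) by (simp add: Cons_nth_drop_Suc)
  have "llr (x!m # drop (Suc m) x) x" using l by (simp only: d)
  then have "llr (x!m # drop (Suc m) x) (a # xs)" by (simp only: ax)
  then have "x!m \<le> a" by auto
  then show ?thesis using ax by simp
qed simp

lemma length_T_pos: "length (T x) = 0 \<Longrightarrow> x = []"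
  by (cases x) auto

lemma Inv1_T: assumes "Inv1 x" shows "Inv1 (T x)"
  unfolding Inv1_def
proof (intro allI impI)
  fix k assume k: "0 < k \<and> k < length (T x)"
  from drop_T[of x k] show "llr (drop k (T x)) (T x)"
  proof
    assume "\<exists>m\<le>length x. drop k (T x) = T (drop m x)"
    then obtain m where m: "m \<le> length x" "drop k (T x) = T (drop m x)" by blast
    have "m \<noteq> 0"
    proof
      assume "m = 0"
      then have "drop k (T x) = T x" using m by simp
      then have "length (T x) - k = length (T x)" by (metis length_drop)
      then show False using k by linarith
    qed
    moreover have "m \<noteq> length x" using m k by auto
    ultimately have "llr (drop m x) x" using assms m unfolding Inv1_def by auto
    then show ?thesis unfolding m(2) by (rule T_mono)
  next
    assume "\<exists>m j. m < length x \<and> j < x!m \<and> drop k (T x) = replicate j 1 @ 0 # T (drop (Suc m) x)"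
    then obtain m j where mj: "m < length x" "j < x!m" "drop k (T x) = replicate j 1 @ 0 # T (drop (Suc m) x)" by blast
    have j0: "j < x!0" using mj Inv1_le[OF assms mj(1)] by simp
    have tx: "T x = replicate (x!0) 1 @ 0 # T (tl x)" using mj(1) by (cases x) auto
    have "llr (replicate j 1 @ 0 # T (drop (Suc m) x)) (replicate (x!0) 1 @ (0 # T (tl x)))"
      by (rule blk[OF j0])
    then show ?thesis by (simp only: mj(3)[symmetric] tx[symmetric])
  qed
qed

lemma Inv2_R: assumes "Inv2 x" shows "Inv2 (R x)"
  unfolding Inv2_def
proof (intro allI impI)
  fix k assume k: "0 < k \<and> k < length (R x)"
  have xne: "x \<noteq> []" using k by auto
  from drop_R[of x k] show "llr (R x) (drop k (R x))"
  proof
    assume "\<exists>m\<le>length x. drop k (R x) = R (drop m x)"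
    then obtain m where m: "m \<le> length x" "drop k (R x) = R (drop m x)" by blast
    have "m \<noteq> 0"
    proof
      assume "m = 0"
      then have "drop k (R x) = R x" using m by simp
      then have "length (R x) - k = length (R x)" by (metis length_drop)
      then show False using k by linarith
    qed
    moreover have "m \<noteq> length x" using m k by auto
    ultimately have "llr x (drop m x)" "length (drop m x) < length x"
      using assms m unfolding Inv2_def by auto
    then show ?thesis unfolding m(2) by (rule R_mono)
  next
    assume "\<exists>m j. m < length x \<and> 0 < j \<and> drop k (R x) = replicate j 1 @ R (drop (Suc m) x)"
    then obtain m j where mj: "0 < j" "drop k (R x) = replicate j 1 @ R (drop (Suc m) x)" by blast
    obtain j' where j': "j = Suc j'" using mj by (cases j) auto
    obtain e xs where ex: "x = e # xs" using xne by (cases x) auto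
    have dk: "drop k (R x) = 1 # (replicate j' 1 @ R (drop (Suc m) x))" using mj(2) j' by simp
    have rx: "R x = 0 # (replicate e 1 @ R xs)" using ex by simp
    have "llr (0 # (replicate e 1 @ R xs)) (1 # (replicate j' 1 @ R (drop (Suc m) x)))" by simp
    then show ?thesis by (simp only: dk[symmetric] rx[symmetric])
  qed
qed

lemma Inv1_Suc: assumes "Inv1 x" shows "Inv1 (map Suc x)"
  unfolding Inv1_def
proof (intro allI impI)
  fix k assume "0 < k \<and> k < length (map Suc x)"
  then have "llr (drop k x) x" using assms unfolding Inv1_def by simp
  then have "llr (map Suc (drop k x)) (map Suc x)" by (rule Suc_mono)
  then show "llr (drop k (map Suc x)) (map Suc x)" by (simp only: drop_map)
qed
lemma Inv2_Suc: assumes "Inv2 x" shows "Inv2 (map Suc x)"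
  unfolding Inv2_def
proof (intro allI impI)
  fix k assume "0 < k \<and> k < length (map Suc x)"
  then have "llr x (drop k x)" using assms unfolding Inv2_def by simp
  then have "llr (map Suc x) (map Suc (drop k x))" by (rule Suc_mono)
  then show "llr (map Suc x) (drop k (map Suc x))" by (simp only: drop_map)
qed

definition ci :: "nat list \<Rightarrow> letter list" where
  "ci x = concat (map (\<lambda>e. replicate e LA @ [LB]) x)"
definition cii :: "nat list \<Rightarrow> letter list" where
  "cii x = concat (map (\<lambda>e. LA # replicate e LB) x)"

lemma nmove_app: "nmove_apply m (u @ v) = nmove_apply m u @ nmove_apply m v"
  by (simp add: nmove_apply_def)
lemma nmove_Cons: "nmove_apply m (a # v) = nsub m a @ nmove_apply m v"
  by (simp add: nmove_apply_def)
lemma nmove_Nil: "nmove_apply m [] = []"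
  by (simp add: nmove_apply_def)

lemma rep_MV_LA: "nmove_apply MV (replicate e LA) = replicate e LA"
  by (induction e) (auto simp: nmove_Cons nmove_Nil)
lemma rep_MU_LB: "nmove_apply MU (replicate e LB) = replicate e LB"
  by (induction e) (auto simp: nmove_Cons nmove_Nil)
lemma rep_MU_LA: "nmove_apply MU (replicate e LA) @ [LB] = ci (replicate e 1 @ [0])"
  by (induction e) (auto simp: nmove_Cons nmove_Nil ci_def)
lemma rep_MV_LB: "LA # nmove_apply MV (replicate e LB) = cii (0 # replicate e 1)"
  by (induction e) (auto simp: nmove_Cons nmove_Nil cii_def)

lemma ci_app: "ci (x @ y) = ci x @ ci y" by (simp add: ci_def)
lemma cii_app: "cii (x @ y) = cii x @ cii y" by (simp add: cii_def)

lemma ci_MV: "nmove_apply MV (ci x) = ci (map Suc x)"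
  by (induction x) (auto simp: ci_def nmove_app nmove_Cons nmove_Nil rep_MV_LA replicate_append_same)
lemma ci_MU: "nmove_apply MU (ci x) = ci (T x)"
proof (induction x)
  case Nil then show ?case by (simp add: ci_def nmove_Nil)
next
  case (Cons e xs)
  have "nmove_apply MU (ci (e#xs)) = nmove_apply MU (replicate e LA) @ [LB] @ nmove_apply MU (ci xs)"
    by (simp add: ci_def nmove_app nmove_Cons nmove_Nil)
  also have "\<dots> = ci (replicate e 1 @ [0]) @ ci (T xs)" using Cons rep_MU_LA by (metis append_assoc)
  finally show ?case by (simp add: ci_app[symmetric])
qed
lemma cii_MU: "nmove_apply MU (cii x) = cii (map Suc x)"
  by (induction x) (auto simp: cii_def nmove_app nmove_Cons nmove_Nil rep_MU_LB)
lemma cii_MV: "nmove_apply MV (cii x) = cii (R x)"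
proof (induction x)
  case Nil then show ?case by (simp add: cii_def nmove_Nil)
next
  case (Cons e xs)
  have "nmove_apply MV (cii (e#xs)) = (LA # nmove_apply MV (replicate e LB)) @ nmove_apply MV (cii xs)"
    by (simp add: cii_def nmove_app nmove_Cons nmove_Nil)
  also have "\<dots> = cii (0 # replicate e 1) @ cii (R xs)" using Cons rep_MV_LB by metis
  finally show ?case by (simp add: cii_app[symmetric])
qed

lemma nmoves_Cons: "nmoves_apply (m # ms) w = nmove_apply m (nmoves_apply ms w)"
  by (simp add: nmoves_apply_def)
lemma nmoves_Nil: "nmoves_apply [] w = w"
  by (simp add: nmoves_apply_def)

lemma reach_i: "\<exists>x. nmoves_apply ms [LA, LB] = ci x \<and> Inv1 x \<and> Inv2 (rev x)"
proof (induction ms)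
  case Nil
  show ?case by (rule exI[of _ "[1]"]) (auto simp: nmoves_Nil ci_def Inv1_def Inv2_def)
next
  case (Cons m ms)
  then obtain x where x: "nmoves_apply ms [LA, LB] = ci x" "Inv1 x" "Inv2 (rev x)" by blast
  show ?case
  proof (cases m)
    case MU then show ?thesis using x
      by (intro exI[of _ "T x"]) (simp add: nmoves_Cons ci_MU Inv1_T rev_T Inv2_R)
  next
    case MV then show ?thesis using x
      by (intro exI[of _ "map Suc x"]) (simp add: nmoves_Cons ci_MV Inv1_Suc Inv2_Suc rev_map)
  qed
qed

lemma reach_ii: "\<exists>x. nmoves_apply ms [LA, LB] = cii x \<and> Inv1 (rev x) \<and> Inv2 x"
proof (induction ms)
  case Nil
  show ?case by (rule exI[of _ "[1]"]) (auto simp: nmoves_Nil cii_def Inv1_def Inv2_def)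
next
  case (Cons m ms)
  then obtain x where x: "nmoves_apply ms [LA, LB] = cii x" "Inv1 (rev x)" "Inv2 x" by blast
  show ?case
  proof (cases m)
    case MV
    have "rev (R x) = T (rev x)" using rev_T[of "rev x"] by (metis rev_rev_ident)
    then show ?thesis using x MV
      by (intro exI[of _ "R x"]) (simp add: nmoves_Cons cii_MV Inv1_T Inv2_R)
  next
    case MU then show ?thesis using x
      by (intro exI[of _ "map Suc x"]) (simp add: nmoves_Cons cii_MU Inv1_Suc Inv2_Suc rev_map)
  qed
qed

lemma rep_inj_A: "replicate a LA @ LB # u = replicate b LA @ LB # v \<Longrightarrow> a = b \<and> u = v"
proof (induction a arbitrary: b)
  case 0 then show ?case by (cases b) auto
next
  case (Suc a) then show ?case by (cases b) auto
qed

lemma ci_inj: "ci x = ci y \<Longrightarrow> x = y"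
proof (induction x arbitrary: y)
  case Nil then show ?case by (cases y) (auto simp: ci_def)
next
  case (Cons a xs)
  then show ?case
  proof (cases y)
    case Nil then show ?thesis using Cons by (simp add: ci_def)
  next
    case (Cons b ys)
    then have "replicate a LA @ LB # ci xs = replicate b LA @ LB # ci ys"
      using Cons.prems by (simp add: ci_def)
    then show ?thesis using rep_inj_A Cons.IH Cons by blast
  qed
qed

lemma cii_hd: "cii x = [] \<or> hd (cii x) = LA"
  by (cases x) (auto simp: cii_def)

lemma rep_inj_B: "replicate a LB @ u = replicate b LB @ v \<Longrightarrow> (u = [] \<or> hd u = LA) \<Longrightarrow>
    (v = [] \<or> hd v = LA) \<Longrightarrow> a = b \<and> u = v"
proof (induction a arbitrary: b)
  case 0 then show ?case by (cases b) auto
next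
  case (Suc a) then show ?case by (cases b) auto
qed

lemma cii_inj: "cii x = cii y \<Longrightarrow> x = y"
proof (induction x arbitrary: y)
  case Nil then show ?case by (cases y) (auto simp: cii_def)
next
  case (Cons a xs)
  then show ?case
  proof (cases y)
    case Nil then show ?thesis using Cons by (simp add: cii_def)
  next
    case (Cons b ys)
    then have "replicate a LB @ cii xs = replicate b LB @ cii ys"
      using Cons.prems by (simp add: cii_def)
    then show ?thesis using rep_inj_B[OF _ cii_hd cii_hd] Cons.IH Cons by blast
  qed
qed

lemma ci_eq: "concat (map (\<lambda>e. replicate e LA @ [LB]) es) = ci es" by (simp add: ci_def)
lemma cii_eq: "concat (map (\<lambda>e. LA # replicate e LB) es) = cii es" by (simp add: cii_def)

lemma border_free:
  assumes "Inv1 (rev x)" "0 < k" "k < length x"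
  shows "\<not> (\<exists>z. x = drop k x @ z)"
proof
  assume "\<exists>z. x = drop k x @ z"
  then obtain z where z: "x = drop k x @ z" by blast
  have "length x = length (drop k x) + length z" using arg_cong[OF z, of length] by simp
  then have lz: "length z = k" using assms by simp
  have "rev x = rev (drop k x @ z)" using z by simp
  then have "rev x = rev z @ rev (drop k x)" by simp
  then have d: "drop k (rev x) = rev (drop k x)" using lz by simp
  have A: "rev x = rev (drop k x) @ rev (take k x)"
    using append_take_drop_id[of k x] rev_append[of "take k x" "drop k x"] by simp
  have B: "llr (drop k (rev x)) (rev x)" using assms unfolding Inv1_def by simp
  then have "llr (rev (drop k x)) (rev x)" by (simp only: d)
  then have "llr (rev (drop k x)) (rev (drop k x) @ rev (take k x))" by (subst (asm) A)
  then show False by (rule llr_prefix)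
qed

theorem lemma4p6:
  fixes ms :: "nmove list" and es :: "nat list"
  shows
  "(nmoves_apply ms [LA, LB] = concat (map (\<lambda>e. replicate e LA @ [LB]) es)
      \<and> (\<forall>e\<in>set es. e \<ge> 1)
    \<longrightarrow> (\<forall>i\<in>{2..length es}.
          lex_less (seq_inf (drop (i - 1) es)) (seq_inf es)
        \<and> lex_less (seq_inf (rev es)) (seq_inf (drop (i - 1) (rev es)))))
   \<and>
   (nmoves_apply ms [LA, LB] = concat (map (\<lambda>e. LA # replicate e LB) es)
      \<and> (\<forall>e\<in>set es. e \<ge> 1)
    \<longrightarrow> (\<forall>i\<in>{2..length es}.
          lex_less (seq_one es) (seq_one (drop (i - 1) es))
        \<and> lex_less (seq_one (drop (i - 1) (rev es))) (seq_one (rev es))))"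
proof (intro conjI impI ballI)
  fix i assume h: "nmoves_apply ms [LA, LB] = concat (map (\<lambda>e. replicate e LA @ [LB]) es)
      \<and> (\<forall>e\<in>set es. e \<ge> 1)" and i: "i \<in> {2..length es}"
  obtain x where x: "nmoves_apply ms [LA, LB] = ci x" "Inv1 x" "Inv2 (rev x)" using reach_i by blast
  have "ci x = ci es" using h x(1) ci_eq by simp
  then have "x = es" by (rule ci_inj)
  then have I: "Inv1 es" "Inv2 (rev es)" using x by auto
  have k: "0 < i - 1" "i - 1 < length es" using i by auto
  show "lex_less (seq_inf (drop (i - 1) es)) (seq_inf es)"
    using I(1) k unfolding Inv1_def by (intro llr_lex) auto
  show "lex_less (seq_inf (rev es)) (seq_inf (drop (i - 1) (rev es)))"
    using I(2) k unfolding Inv2_def by (intro llr_lex) auto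
next
  fix i assume h: "nmoves_apply ms [LA, LB] = concat (map (\<lambda>e. LA # replicate e LB) es)
      \<and> (\<forall>e\<in>set es. e \<ge> 1)" and i: "i \<in> {2..length es}"
  obtain x where x: "nmoves_apply ms [LA, LB] = cii x" "Inv1 (rev x)" "Inv2 x" using reach_ii by blast
  have "cii x = cii es" using h x(1) cii_eq by simp
  then have "x = es" by (rule cii_inj)
  then have I: "Inv1 (rev es)" "Inv2 es" using x by auto
  have k: "0 < i - 1" "i - 1 < length es" using i by auto
  have "llr es (drop (i - 1) es)" using I(2) k unfolding Inv2_def by auto
  then show "lex_less (seq_one es) (seq_one (drop (i - 1) es))"
    using border_free[OF I(1) k] by (intro llo_lex llr_llo)
  have "llr (drop (i - 1) (rev es)) (rev es)" using I(1) k unfolding Inv1_def by auto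
  moreover have "\<not> (\<exists>z. drop (i - 1) (rev es) = rev es @ z)"
  proof
    assume "\<exists>z. drop (i - 1) (rev es) = rev es @ z"
    then obtain z where "drop (i - 1) (rev es) = rev es @ z" by blast
    then have "length (drop (i - 1) (rev es)) \<ge> length (rev es)" by simp
    then show False using k by simp
  qed
  ultimately show "lex_less (seq_one (drop (i - 1) (rev es))) (seq_one (rev es))"
    by (intro llo_lex llr_llo)
qed

end
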